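(* Let $I\subseteq\overline{\mathbb R}[x_1^{\pm1},\dots,x_n^{\pm1}]$ be a tropical ideal and $a\in\mathbb R$, and let $\pi:\mathbb R^n\to\mathbb R^{n-1}$ be the projection onto the first $n-1$ coordinates. Then $V(I|_{x_n=a})\subseteq\pi(V(I)\cap\{x_n=a\})$. Moreover, if $\mathbf w\in\mathbb R^n$ with $w_n=a$ lies in a closed cell $\sigma$ of a polyhedral complex $\Sigma$ with $|\Sigma|=V(I)$ such that $\operatorname{span}(\sigma)\not\subseteq\{x_n=0\}$, then $\pi(\mathbf w)\in V(I|_{x_n=a})$. In particular, if $V(I)$ and $\{x_n=a\}$ intersect transversely at $\mathbf w$, then $\pi(\mathbf w)\in V(I|_{x_n=a})$.
   Context: $\overline{\mathbb R}=(\mathbb R\cup\{\infty\},\min,+)$. $[f]_{\mathbf x^{\mathbf u}}$ is the coefficient of $\mathbf x^{\mathbf u}$, $f(\mathbf w)=\min_{\mathbf u}([f]_{\mathbf x^{\mathbf u}}+\mathbf u\cdot\mathbf w)$. Tropical ideal: for $f,g\in I$ and $\mathbf x^{\mathbf u}$ with $[f]_{\mathbf x^{\mathbf u}}=[g]_{\mathbf x^{\mathbf u}}\ne\infty$ there is $h\in I$ with $[h]_{\mathbf x^{\mathbf u}}=\infty$ and $[h]_{\mathbf x^{\mathbf v}}\ge\min([f]_{\mathbf x^{\mathbf v}},[g]_{\mathbf x^{\mathbf v}})$ for all $\mathbf v$, with equality when $[f]_{\mathbf x^{\mathbf v}}\ne[g]_{\mathbf x^{\mathbf v}}$. $I|_{x_n=a}=\{f|_{x_n=a}:f\in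 I\}\subseteq\overline{\mathbb R}[x_1^{\pm1},\dots,x_{n-1}^{\pm1}]$. $V(K)$ is the set of points at which the minimum of every $f\in K$, $f\ne\infty$, is attained at least twice. $\operatorname{span}(\sigma)=\operatorname{span}\{\mathbf x-\mathbf y:\mathbf x,\mathbf y\in\sigma\}$. Two polyhedral complexes intersect transversely at $\mathbf w$ if $\mathbf w$ lies in the relative interiors of cells $\sigma_1,\sigma_2$ of each with $\operatorname{span}(\sigma_1)+\operatorname{span}(\sigma_2)=\mathbb R^n$. *)

theory Defs
  imports "HOL-Analysis.Analysis"
begin

text \<open>A polynomial is its coefficient function: exponent vector \<mapsto> coefficient in
  R \<union> {\<infinity>}, represented in ereal (the value -\<infinity> is excluded).
  The semiring is (min, +).\<close>

type_synonym 'i tpoly = "('i \<Rightarrow> int) \<Rightarrow> ereal"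

definition tpoly_on :: "'i set \<Rightarrow> 'i tpoly \<Rightarrow> bool" where
  "tpoly_on S f \<longleftrightarrow> (\<forall>u. f u \<noteq> -\<infinity>) \<and> finite {u. f u \<noteq> \<infinity>}
     \<and> (\<forall>u. f u \<noteq> \<infinity> \<longrightarrow> (\<forall>i. i \<notin> S \<longrightarrow> u i = 0))"

definition mono_val :: "('i::finite \<Rightarrow> int) \<Rightarrow> ('i \<Rightarrow> real) \<Rightarrow> real" where
  "mono_val u w = (\<Sum>i\<in>UNIV. real_of_int (u i) * w i)"

definition trop_eval :: "'i::finite tpoly \<Rightarrow> ('i \<Rightarrow> real) \<Rightarrow> ereal" where
  "trop_eval f w = (INF u. f u + ereal (mono_val u w))"

definition min_twice :: "'i::finite tpoly \<Rightarrow> ('i \<Rightarrow> real) \<Rightarrow> bool" where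
  "min_twice f w \<longleftrightarrow> (\<exists>u v. u \<noteq> v \<and> f u \<noteq> \<infinity> \<and> f v \<noteq> \<infinity>
      \<and> f u + ereal (mono_val u w) = trop_eval f w
      \<and> f v + ereal (mono_val v w) = trop_eval f w)"

text \<open>V(K) for polynomials in the variables indexed by S; points of R^S are
  represented as functions vanishing outside S.\<close>
definition trop_variety :: "'i::finite set \<Rightarrow> 'i tpoly set \<Rightarrow> ('i \<Rightarrow> real) set" where
  "trop_variety S K = {w. (\<forall>i. i \<notin> S \<longrightarrow> w i = 0)
      \<and> (\<forall>f\<in>K. f \<noteq> (\<lambda>_. \<infinity>) \<longrightarrow> min_twice f w)}"

text \<open>Tropical ideal in the Laurent semiring R[x_i^{\<plusminus>1} : i \<in> 'i]:
  an ideal (contains \<infinity>, closed under tropical sum, closed under tropical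
  multiplication by monomials c x^m -- together equivalent to closure under
  multiplication by arbitrary polynomials) satisfying the elimination axiom.\<close>
definition tropical_ideal :: "'i::finite tpoly set \<Rightarrow> bool" where
  "tropical_ideal I \<longleftrightarrow>
     (\<forall>f\<in>I. tpoly_on UNIV f) \<and> (\<lambda>_. \<infinity>) \<in> I
     \<and> (\<forall>f\<in>I. \<forall>g\<in>I. (\<lambda>u. min (f u) (g u)) \<in> I)
     \<and> (\<forall>f\<in>I. \<forall>c::real. \<forall>m. (\<lambda>u. ereal c + f (u - m)) \<in> I)
     \<and> (\<forall>f\<in>I. \<forall>g\<in>I. \<forall>u. f u = g u \<and> f u \<noteq> \<infinity> \<longrightarrow>
          (\<exists>h\<in>I. h u = \<infinity> \<and> (\<forall>v. h v \<ge> min (f v) (g v)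
                 \<and> (f v \<noteq> g v \<longrightarrow> h v = min (f v) (g v)))))"

definition restrict_at :: "'i \<Rightarrow> real \<Rightarrow> 'i tpoly \<Rightarrow> 'i tpoly" where
  "restrict_at l a f = (\<lambda>u. if u l = 0
      then (INF k::int. f (u(l := k)) + ereal (real_of_int k * a)) else \<infinity>)"

definition tvar :: "'n::finite tpoly set \<Rightarrow> (real^'n) set" where
  "tvar I = {w. vec_nth w \<in> trop_variety UNIV I}"

text \<open>Projection forgetting coordinate l (R^{n-1} identified with functions vanishing at l).\<close>
definition proj_out :: "'n \<Rightarrow> real^'n \<Rightarrow> ('n \<Rightarrow> real)" where
  "proj_out l w = (\<lambda>i. if i = l then 0 else w $ i)"

definition polyhedral_complex :: "('a::euclidean_space) set set \<Rightarrow> bool" where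
  "polyhedral_complex \<Sigma> \<longleftrightarrow> finite \<Sigma> \<and> (\<forall>\<sigma>\<in>\<Sigma>. polyhedron \<sigma>)
     \<and> (\<forall>\<sigma>\<in>\<Sigma>. \<forall>\<tau>. \<tau> face_of \<sigma> \<and> \<tau> \<noteq> {} \<longrightarrow> \<tau> \<in> \<Sigma>)
     \<and> (\<forall>\<sigma>\<in>\<Sigma>. \<forall>\<tau>\<in>\<Sigma>. \<sigma> \<inter> \<tau> = {} \<or> (\<sigma> \<inter> \<tau> face_of \<sigma> \<and> \<sigma> \<inter> \<tau> face_of \<tau>))"

definition span_diff :: "('a::real_vector) set \<Rightarrow> 'a set" where
  "span_diff \<sigma> = span {x - y | x y. x \<in> \<sigma> \<and> y \<in> \<sigma>}"

definition transverse_at :: "('a::euclidean_space) set set \<Rightarrow> 'a set set \<Rightarrow> 'a \<Rightarrow> bool" where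
  "transverse_at \<Sigma>1 \<Sigma>2 w \<longleftrightarrow> (\<exists>\<sigma>1\<in>\<Sigma>1. \<exists>\<sigma>2\<in>\<Sigma>2. w \<in> rel_interior \<sigma>1 \<and> w \<in> rel_interior \<sigma>2
      \<and> {x + y | x y. x \<in> span_diff \<sigma>1 \<and> y \<in> span_diff \<sigma>2} = UNIV)"

end

theory Submission
  imports Defs
begin

lemma min_twice_iff:
  "min_twice f w \<longleftrightarrow> (\<exists>u v. u \<noteq> v \<and> f u \<noteq> \<infinity> \<and> f v \<noteq> \<infinity>
     \<and> f u + ereal (mono_val u w) = f v + ereal (mono_val v w)
     \<and> (\<forall>z. f u + ereal (mono_val u w) \<le> f z + ereal (mono_val z w)))"
proof
  assume "min_twice f w"
  then obtain u v where h: "u \<noteq> v" "f u \<noteq> \<infinity>" "f v \<noteq> \<infinity>"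
    "f u + ereal (mono_val u w) = trop_eval f w" "f v + ereal (mono_val v w) = trop_eval f w"
    unfolding min_twice_def by blast
  have hz: "\<forall>z. f u + ereal (mono_val u w) \<le> f z + ereal (mono_val z w)"
  proof
    fix z
    have "trop_eval f w \<le> f z + ereal (mono_val z w)"
      unfolding trop_eval_def by (rule INF_lower) simp
    then show "f u + ereal (mono_val u w) \<le> f z + ereal (mono_val z w)" using h(4) by simp
  qed
  show "\<exists>u v. u \<noteq> v \<and> f u \<noteq> \<infinity> \<and> f v \<noteq> \<infinity>
     \<and> f u + ereal (mono_val u w) = f v + ereal (mono_val v w)
     \<and> (\<forall>z. f u + ereal (mono_val u w) \<le> f z + ereal (mono_val z w))"
    apply (rule exI[of _ u], rule exI[of _ v])
    using h hz by simp
next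
  assume "\<exists>u v. u \<noteq> v \<and> f u \<noteq> \<infinity> \<and> f v \<noteq> \<infinity>
     \<and> f u + ereal (mono_val u w) = f v + ereal (mono_val v w)
     \<and> (\<forall>z. f u + ereal (mono_val u w) \<le> f z + ereal (mono_val z w))"
  then obtain u v where h: "u \<noteq> v" "f u \<noteq> \<infinity>" "f v \<noteq> \<infinity>"
     "f u + ereal (mono_val u w) = f v + ereal (mono_val v w)"
     "\<forall>z. f u + ereal (mono_val u w) \<le> f z + ereal (mono_val z w)" by blast
  have e: "trop_eval f w = f u + ereal (mono_val u w)"
    unfolding trop_eval_def
  proof (rule antisym)
    show "(INF z. f z + ereal (mono_val z w)) \<le> f u + ereal (mono_val u w)"
      by (rule INF_lower) simp
    show "f u + ereal (mono_val u w) \<le> (INF z. f z + ereal (mono_val z w))"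
      by (rule INF_greatest) (use h(5) in simp)
  qed
  show "min_twice f w" unfolding min_twice_def
    by (intro exI[of _ u] exI[of _ v]) (simp add: h e)
qed

lemma mv_split:
  "mono_val z W = mono_val (z(l:=0)) (W(l:=0)) + real_of_int (z l) * W l"
proof -
  have "mono_val z W = (\<Sum>i\<in>UNIV. real_of_int ((z(l:=0)) i) * (W(l:=0)) i
      + (if i = l then real_of_int (z l) * W l else 0))"
    unfolding mono_val_def by (intro sum.cong refl) auto
  also have "\<dots> = mono_val (z(l:=0)) (W(l:=0)) + (\<Sum>i\<in>UNIV. (if i = l then real_of_int (z l) * W l else 0))"
    unfolding mono_val_def by (rule sum.distrib)
  also have "(\<Sum>i\<in>UNIV. (if i = l then real_of_int (z l) * W l else 0)) = real_of_int (z l) * W l"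
    using sum.delta[of "UNIV::'a set" l "\<lambda>_. real_of_int (z l) * W l"] by simp
  finally show ?thesis .
qed

lemma mv_lin:
  "mono_val z (\<lambda>i. W i + t * D i) = mono_val z W + t * mono_val z D"
  by (simp add: mono_val_def algebra_simps sum.distrib sum_distrib_left)

lemma restrict_le:
  "u l = 0 \<Longrightarrow> restrict_at l a f u \<le> f (u(l:=k)) + ereal (real_of_int k * a)"
  using INF_lower[of k UNIV "\<lambda>k. f (u(l:=k)) + ereal (real_of_int k * a)"]
  by (simp add: restrict_at_def)

lemma restrict_ge:
  "u l = 0 \<Longrightarrow> (\<And>k. c \<le> f (u(l:=k)) + ereal (real_of_int k * a)) \<Longrightarrow> c \<le> restrict_at l a f u"
  unfolding restrict_at_def by (simp add: INF_greatest)

lemma restrict_inf: "u l \<noteq> 0 \<Longrightarrow> restrict_at l a f u = \<infinity>"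
  unfolding restrict_at_def by simp

lemma restrict_attain:
  assumes tp: "tpoly_on UNIV f" and ne: "restrict_at l a f u \<noteq> \<infinity>"
  shows "u l = 0 \<and> (\<exists>k. restrict_at l a f u = f (u(l:=k)) + ereal (real_of_int k * a)
            \<and> f (u(l:=k)) \<noteq> \<infinity>)"
proof -
  have ul: "u l = 0" using ne restrict_inf by metis
  define A where "A = {k. f (u(l:=k)) \<noteq> \<infinity>}"
  define F where "F k = f (u(l:=k)) + ereal (real_of_int k * a)" for k
  have "A \<subseteq> (\<lambda>z. z l) ` {z. f z \<noteq> \<infinity>}"
    unfolding A_def by (auto intro!: image_eqI[where x="u(l:=k)" for k])
  moreover have "finite {z. f z \<noteq> \<infinity>}" using tp unfolding tpoly_on_def by blast
  ultimately have fA: "finite A" by (meson finite_imageI finite_subset)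
  have Finf: "k \<notin> A \<Longrightarrow> F k = \<infinity>" for k unfolding A_def F_def by simp
  have "A \<noteq> {}"
  proof
    assume "A = {}"
    have "\<infinity> \<le> restrict_at l a f u"
    proof (rule restrict_ge)
      show "u l = 0" by (rule ul)
    qed (use Finf \<open>A = {}\<close> in \<open>auto simp: F_def\<close>)
    then show False using ne by (simp add: top_unique)
  qed
  define m where "m = Min (F ` A)"
  have "m \<in> F ` A" unfolding m_def using fA \<open>A \<noteq> {}\<close> by (intro Min_in) auto
  then obtain k0 where k0: "k0 \<in> A" "m = F k0" by blast
  have mle: "m \<le> F k" for k
  proof (cases "k \<in> A")
    case True then show ?thesis unfolding m_def using fA by (intro Min_le) auto
  next
    case False then show ?thesis using Finf by simp
  qed
  have "restrict_at l a f u = F k0"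
  proof (rule antisym)
    show "restrict_at l a f u \<le> F k0" unfolding F_def using ul by (rule restrict_le)
    show "F k0 \<le> restrict_at l a f u"
    proof (rule restrict_ge)
      show "u l = 0" by (rule ul)
    qed (use mle k0(2) in \<open>auto simp: F_def\<close>)
  qed
  then show ?thesis using ul k0 unfolding F_def A_def by blast
qed

lemma span_hyp:
  fixes \<sigma> :: "(real^'n) set"
  assumes "\<forall>x\<in>\<sigma>. x $ l = c"
  shows "span_diff \<sigma> \<subseteq> {x. x $ l = 0}"
proof -
  have "subspace {x::real^'n. x $ l = 0}" unfolding subspace_def by auto
  moreover have "{x - y | x y. x \<in> \<sigma> \<and> y \<in> \<sigma>} \<subseteq> {x. x $ l = 0}" using assms by auto
  ultimately show ?thesis unfolding span_diff_def by (intro span_minimal)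
qed

lemma aff_lim:
  fixes \<alpha> \<beta> :: real
  assumes "infinite N" "\<forall>n\<in>N. 0 \<le> \<alpha> + (1 / (real n + 1)) * \<beta>"
  shows "0 \<le> \<alpha>"
proof (rule ccontr)
  assume "\<not> 0 \<le> \<alpha>"
  then have a: "\<alpha> < 0" by simp
  obtain K :: nat where K: "\<bar>\<beta>\<bar> / (- \<alpha>) < real K" using reals_Archimedean2 by blast
  obtain n where n: "n \<ge> K" "n \<in> N" using assms(1) unfolding infinite_nat_iff_unbounded_le by blast
  have "\<bar>\<beta>\<bar> < real K * (- \<alpha>)" using pos_divide_less_eq[of "- \<alpha>" "\<bar>\<beta>\<bar>" "real K"] K a by linarith
  then have "\<bar>\<beta>\<bar> < (- \<alpha>) * real K" by (simp add: mult.commute)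
  also have "\<dots> \<le> (- \<alpha>) * (real n + 1)" using a n by (intro mult_left_mono) auto
  finally have "\<bar>\<beta>\<bar> / (real n + 1) < - \<alpha>"
    using pos_divide_less_eq[of "real n + 1" "\<bar>\<beta>\<bar>" "- \<alpha>"] by (simp add: mult.commute)
  moreover have "\<beta> / (real n + 1) \<le> \<bar>\<beta>\<bar> / (real n + 1)" by (intro divide_right_mono) auto
  ultimately have "\<alpha> + (1 / (real n + 1)) * \<beta> < 0" by simp
  then show False using assms(2) n(2) by (meson not_le)
qed

lemma ereal_add3: "(x::ereal) + ereal (p + q) = x + ereal q + ereal p"
  by (cases x) (simp_all add: algebra_simps)

lemma restrict_top: "restrict_at l a (\<lambda>_. \<infinity>) = (\<lambda>_. \<infinity>)"
  unfolding restrict_at_def by (auto simp: fun_eq_iff)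

lemma part1:
  fixes I :: "('n::finite) tpoly set"
  assumes TI: "tropical_ideal I" and wv: "w' \<in> trop_variety (- {l}) (restrict_at l a ` I)"
  shows "w' \<in> proj_out l ` (tvar I \<inter> {x. x $ l = a})"
proof -
  have w'l: "w' l = 0" using wv unfolding trop_variety_def by auto
  have wg: "\<And>f. f \<in> I \<Longrightarrow> restrict_at l a f \<noteq> (\<lambda>_. \<infinity>) \<Longrightarrow> min_twice (restrict_at l a f) w'"
    using wv unfolding trop_variety_def by auto
  define W where "W = (\<lambda>i. if i = l then a else w' i)"
  define w :: "real^'n" where "w = vec_lambda W"
  have wW: "vec_nth w = W" unfolding w_def by (simp add: fun_eq_iff)
  have Wl: "W l = a" and W0: "W(l:=0) = w'" unfolding W_def using w'l by auto
  have mvW: "mono_val z W = mono_val (z(l:=0)) w' + real_of_int (z l) * a" for z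
    using mv_split[of z W l] Wl W0 by simp
  have "\<forall>f\<in>I. f \<noteq> (\<lambda>_. \<infinity>) \<longrightarrow> min_twice f W"
  proof (intro ballI impI)
    fix f assume fI: "f \<in> I" and fne: "f \<noteq> (\<lambda>_. \<infinity>)"
    have tp: "tpoly_on UNIV f" using TI fI unfolding tropical_ideal_def by auto
    define g where "g = restrict_at l a f"
    obtain u0 where u0: "f u0 \<noteq> \<infinity>" using fne by auto
    have "g (u0(l:=0)) \<le> f u0 + ereal (real_of_int (u0 l) * a)"
      unfolding g_def using restrict_le[of "u0(l:=0)" l a f "u0 l"] by simp
    hence "g (u0(l:=0)) \<noteq> \<infinity>" using u0 by auto
    hence gne: "g \<noteq> (\<lambda>_. \<infinity>)" by auto
    have "min_twice g w'" using wg[OF fI] gne unfolding g_def by auto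
    then obtain u v where h: "u \<noteq> v" "g u \<noteq> \<infinity>" "g v \<noteq> \<infinity>"
      "g u + ereal (mono_val u w') = g v + ereal (mono_val v w')"
      "\<forall>z. g u + ereal (mono_val u w') \<le> g z + ereal (mono_val z w')"
      unfolding min_twice_iff by blast
    obtain ku where ku: "u l = 0" "g u = f (u(l:=ku)) + ereal (real_of_int ku * a)" "f (u(l:=ku)) \<noteq> \<infinity>"
      using restrict_attain[OF tp, of l a u] h(2) unfolding g_def by blast
    obtain kv where kv: "v l = 0" "g v = f (v(l:=kv)) + ereal (real_of_int kv * a)" "f (v(l:=kv)) \<noteq> \<infinity>"
      using restrict_attain[OF tp, of l a v] h(3) unfolding g_def by blast
    define U where "U = u(l:=ku)"
    define V where "V = v(l:=kv)"
    have U0: "U(l:=0) = u" unfolding U_def using ku(1) by (metis fun_upd_triv fun_upd_upd)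
    have V0: "V(l:=0) = v" unfolding V_def using kv(1) by (metis fun_upd_triv fun_upd_upd)
    have UV: "U \<noteq> V" using U0 V0 h(1) by metis
    have TU: "f U + ereal (mono_val U W) = g u + ereal (mono_val u w')"
      using mvW[of U] U0 ku(2) unfolding U_def by (simp add: ereal_add3)
    have TV: "f V + ereal (mono_val V W) = g v + ereal (mono_val v w')"
      using mvW[of V] V0 kv(2) unfolding V_def by (simp add: ereal_add3)
    have low: "g u + ereal (mono_val u w') \<le> f z + ereal (mono_val z W)" for z
    proof -
      have zz: "(z(l:=0))(l := z l) = z" by simp
      have "g (z(l:=0)) \<le> f z + ereal (real_of_int (z l) * a)"
        unfolding g_def using restrict_le[of "z(l:=0)" l a f "z l"] by simp
      hence "g (z(l:=0)) + ereal (mono_val (z(l:=0)) w') \<le> f z + ereal (real_of_int (z l) * a) + ereal (mono_val (z(l:=0)) w')"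
        by (rule add_right_mono)
      also have "\<dots> = f z + ereal (mono_val z W)" using mvW[of z] by (simp add: ereal_add3)
      finally show ?thesis using h(5) by (meson order_trans)
    qed
    show "min_twice f W" unfolding min_twice_iff
      apply (rule exI[of _ U], rule exI[of _ V])
      using UV ku(3) kv(3) TU TV h(4) low unfolding U_def V_def by simp
  qed
  then have "w \<in> tvar I" unfolding tvar_def trop_variety_def using wW by simp
  moreover have "w $ l = a" using wW Wl by simp
  moreover have "proj_out l w = w'" using wW w'l unfolding proj_out_def W_def by auto
  ultimately show ?thesis by blast
qed

lemma part2:
  fixes I :: "('n::finite) tpoly set" and \<sigma> :: "(real^'n) set"
  assumes TI: "tropical_ideal I" and wl: "w $ l = a" and sub: "\<sigma> \<subseteq> tvar I"
    and cv: "convex \<sigma>" and w\<sigma>: "w \<in> \<sigma>" and sp: "\<not> span_diff \<sigma> \<subseteq> {x. x $ l = 0}"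
  shows "proj_out l w \<in> trop_variety (- {l}) (restrict_at l a ` I)"
proof -
  have "\<exists>y\<in>\<sigma>. y $ l \<noteq> a"
  proof (rule ccontr)
    assume "\<not> ?thesis"
    hence "\<forall>x\<in>\<sigma>. x $ l = a" by blast
    thus False using span_hyp sp by blast
  qed
  then obtain y where y: "y \<in> \<sigma>" "y $ l \<noteq> a" by blast
  define W where "W = vec_nth w"
  define D where "D = vec_nth (y - w)"
  define w' where "w' = proj_out l w"
  have Dl: "D l \<noteq> 0" using y wl by (simp add: D_def)
  have Wl: "W l = a" using wl by (simp add: W_def)
  have w'eq: "W(l:=0) = w'" by (auto simp: proj_out_def W_def w'_def fun_eq_iff)
  have w'l: "w' l = 0" by (simp add: w'_def proj_out_def)
  have mvW: "mono_val z W = mono_val (z(l:=0)) w' + real_of_int (z l) * a" for z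
    using mv_split[of z W l] Wl w'eq by simp
  define t where "t n = 1 / (real n + 1)" for n :: nat
  have tinj: "t n1 \<noteq> t n2" if "n1 \<noteq> n2" for n1 n2 using that by (simp add: t_def)
  have pt: "min_twice f (\<lambda>i. W i + t n * D i)" if "f \<in> I" "f \<noteq> (\<lambda>_. \<infinity>)" for f n
  proof -
    have t01: "0 \<le> t n" "0 \<le> 1 - t n" by (auto simp: t_def)
    have "(1 - t n) *\<^sub>R w + t n *\<^sub>R y \<in> \<sigma>" using convexD[OF cv w\<sigma> y(1), of "1 - t n" "t n"] t01 by simp
    moreover have "(1 - t n) *\<^sub>R w + t n *\<^sub>R y = w + t n *\<^sub>R (y - w)" by (simp add: algebra_simps)
    ultimately have "w + t n *\<^sub>R (y - w) \<in> tvar I" using sub by auto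
    hence "vec_nth (w + t n *\<^sub>R (y - w)) \<in> trop_variety UNIV I" by (simp add: tvar_def)
    moreover have "vec_nth (w + t n *\<^sub>R (y - w)) = (\<lambda>i. W i + t n * D i)" by (auto simp: W_def D_def fun_eq_iff)
    ultimately show ?thesis using that unfolding trop_variety_def by auto
  qed
  have "\<forall>g\<in>restrict_at l a ` I. g \<noteq> (\<lambda>_. \<infinity>) \<longrightarrow> min_twice g w'"
  proof (intro ballI impI)
    fix g assume "g \<in> restrict_at l a ` I" and gne: "g \<noteq> (\<lambda>_. \<infinity>)"
    then obtain f where fI: "f \<in> I" and gdef: "g = restrict_at l a f" by blast
    have fne: "f \<noteq> (\<lambda>_. \<infinity>)" using gne gdef restrict_top by metis
    have tp: "tpoly_on UNIV f" using TI fI unfolding tropical_ideal_def by auto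
    define S where "S = {z. f z \<noteq> \<infinity>}"
    have fS: "finite S" using tp unfolding tpoly_on_def S_def by blast
    define c where "c z = real_of_ereal (f z)" for z
    have fc: "f z = ereal (c z)" if "z \<in> S" for z
    proof -
      have "f z \<noteq> - \<infinity>" using tp unfolding tpoly_on_def by blast
      then show ?thesis using that unfolding S_def c_def by (cases "f z") auto
    qed
    have fnS: "f z = \<infinity>" if "z \<notin> S" for z using that unfolding S_def by simp
    define T where "T z s = c z + mono_val z W + s * mono_val z D" for z s
    have Teq: "f z + ereal (mono_val z (\<lambda>i. W i + s * D i)) = ereal (T z s)" if "z \<in> S" for z s
      using that fc mv_lin[of z W s D] by (simp add: T_def)
    define Q where "Q n p \<longleftrightarrow> fst p \<in> S \<and> snd p \<in> S \<and> fst p \<noteq> snd p \<and> T (fst p) (t n) = T (snd p) (t n)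
        \<and> (\<forall>z\<in>S. T (fst p) (t n) \<le> T z (t n))" for n p
    have exQ: "\<exists>p. Q n p" for n
    proof -
      obtain u v where h: "u \<noteq> v" "f u \<noteq> \<infinity>" "f v \<noteq> \<infinity>"
        "f u + ereal (mono_val u (\<lambda>i. W i + t n * D i)) = f v + ereal (mono_val v (\<lambda>i. W i + t n * D i))"
        "\<forall>z. f u + ereal (mono_val u (\<lambda>i. W i + t n * D i)) \<le> f z + ereal (mono_val z (\<lambda>i. W i + t n * D i))"
        using pt[OF fI fne, of n] unfolding min_twice_iff by blast
      have uS: "u \<in> S" and vS: "v \<in> S" using h(2,3) by (auto simp: S_def)
      have "T u (t n) = T v (t n)" using h(4) Teq[OF uS] Teq[OF vS] by simp
      moreover have "\<forall>z\<in>S. T u (t n) \<le> T z (t n)"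
      proof
        fix z assume zS: "z \<in> S"
        show "T u (t n) \<le> T z (t n)" using h(5) Teq[OF uS] Teq[OF zS] by (metis ereal_less_eq(3))
      qed
      ultimately have "Q n (u, v)" unfolding Q_def using uS vS h(1) by simp
      then show ?thesis by blast
    qed
    define P where "P n = (SOME p. Q n p)" for n
    have PQ: "Q n (P n)" for n unfolding P_def using exQ by (rule someI_ex)
    have "P ` UNIV \<subseteq> S \<times> S"
    proof
      fix p assume "p \<in> P ` UNIV"
      then obtain n where "p = P n" by blast
      then show "p \<in> S \<times> S" using PQ[of n] unfolding Q_def by (simp add: mem_Times_iff)
    qed
    hence "finite (P ` UNIV)" using fS by (meson finite_SigmaI finite_subset)
    then obtain p where "infinite (P -` {p})" using inf_img_fin_domE[OF _ infinite_UNIV_nat] by blast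
    define N where "N = P -` {p}"
    have infN: "infinite N" unfolding N_def by fact
    obtain u v where puv: "p = (u, v)" by fastforce
    have QN: "Q n (u, v)" if "n \<in> N" for n using PQ[of n] that unfolding N_def puv by simp
    obtain n1 where n1: "n1 \<in> N" using infN by (metis finite.emptyI ex_in_conv)
    have "infinite (N - {n1})" using infN by simp
    then obtain n2 where n2: "n2 \<in> N - {n1}" by (metis finite.emptyI ex_in_conv)
    have uS: "u \<in> S" and vS: "v \<in> S" and uv: "u \<noteq> v" using QN[OF n1] unfolding Q_def by auto
    have e1: "T u (t n1) = T v (t n1)" and e2: "T u (t n2) = T v (t n2)"
      using QN[OF n1] QN[of n2] n2 unfolding Q_def by auto
    have t12: "t n1 \<noteq> t n2" using n2 tinj by auto
    have "(t n1 - t n2) * (mono_val u D - mono_val v D) = 0"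
      using e1 e2 unfolding T_def by (simp add: algebra_simps)
    hence Beq: "mono_val u D = mono_val v D" using t12 by simp
    have Aeq: "T u 0 = T v 0" using e1 Beq unfolding T_def by simp
    have minu: "T u 0 \<le> T z 0" if zS: "z \<in> S" for z
    proof -
      have "0 \<le> (T z 0 - T u 0) + (1 / (real n + 1)) * (mono_val z D - mono_val u D)" if "n \<in> N" for n
      proof -
        have "\<forall>z\<in>S. T u (t n) \<le> T z (t n)" using QN[OF that] unfolding Q_def fst_conv by blast
        hence "T u (t n) \<le> T z (t n)" using zS by blast
        then show ?thesis unfolding T_def t_def by (simp add: algebra_simps)
      qed
      then have "0 \<le> T z 0 - T u 0" using aff_lim[OF infN] by blast
      then show ?thesis by simp
    qed
    show "min_twice g w'"
    proof (cases "u(l:=0) = v(l:=0)")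
      case True
      have "u l \<noteq> v l"
      proof
        assume "u l = v l"
        hence "(u(l:=0))(l := u l) = (v(l:=0))(l := v l)" using True by simp
        thus False using uv by simp
      qed
      moreover have "mono_val u D - mono_val v D = real_of_int (u l - v l) * D l"
        using mv_split[of u D l] mv_split[of v D l] True by (simp add: algebra_simps)
      moreover have "real_of_int (u l - v l) \<noteq> 0" using \<open>u l \<noteq> v l\<close> by simp
      ultimately have "mono_val u D - mono_val v D \<noteq> 0" using Dl by simp
      hence "mono_val u D \<noteq> mono_val v D" by simp
      then show ?thesis using Beq by simp
    next
      case False
      define m where "m = T u 0"
      have glow: "ereal m \<le> g z' + ereal (mono_val z' w')" for z'
      proof (cases "z' l = 0")
        case False
        then show ?thesis using restrict_inf[where u=z' and l=l, OF False] gdef by simp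
      next
        case True
        have "ereal (m - mono_val z' w') \<le> g z'" unfolding gdef
        proof (rule restrict_ge[where u=z' and l=l, OF True])
          fix k
          show "ereal (m - mono_val z' w') \<le> f (z'(l := k)) + ereal (real_of_int k * a)"
          proof (cases "z'(l:=k) \<in> S")
            case zS: True
            have "(z'(l:=k))(l:=0) = z'" using True by (metis fun_upd_triv fun_upd_upd)
            hence "mono_val (z'(l:=k)) W = mono_val z' w' + real_of_int k * a" using mvW[of "z'(l:=k)"] by simp
            hence "m \<le> c (z'(l:=k)) + mono_val z' w' + real_of_int k * a"
              using minu[OF zS] unfolding m_def T_def by simp
            then show ?thesis using fc[OF zS] by simp
          next
            case False
            then show ?thesis using fnS by simp
          qed
        qed
        hence "ereal (m - mono_val z' w') + ereal (mono_val z' w') \<le> g z' + ereal (mono_val z' w')"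
          by (rule add_right_mono)
        then show ?thesis by simp
      qed
      have key: "g (x(l:=0)) + ereal (mono_val (x(l:=0)) w') = ereal m" if xS: "x \<in> S" and xm: "T x 0 = m" for x
      proof (rule antisym)
        have "g (x(l:=0)) \<le> f x + ereal (real_of_int (x l) * a)"
          unfolding gdef using restrict_le[of "x(l:=0)" l a f "x l"] by simp
        hence "g (x(l:=0)) + ereal (mono_val (x(l:=0)) w') \<le> f x + ereal (real_of_int (x l) * a) + ereal (mono_val (x(l:=0)) w')"
          by (rule add_right_mono)
        also have "\<dots> = ereal m" using fc[OF xS] mvW[of x] xm unfolding T_def by simp
        finally show "g (x(l:=0)) + ereal (mono_val (x(l:=0)) w') \<le> ereal m" .
        show "ereal m \<le> g (x(l:=0)) + ereal (mono_val (x(l:=0)) w')" by (rule glow)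
      qed
      have ku: "g (u(l:=0)) + ereal (mono_val (u(l:=0)) w') = ereal m" using key[OF uS] m_def by simp
      have kv: "g (v(l:=0)) + ereal (mono_val (v(l:=0)) w') = ereal m" using key[OF vS] m_def Aeq by simp
      have gu: "g (u(l:=0)) \<noteq> \<infinity>" using ku by auto
      have gv: "g (v(l:=0)) \<noteq> \<infinity>" using kv by auto
      show ?thesis unfolding min_twice_iff
        apply (rule exI[of _ "u(l:=0)"], rule exI[of _ "v(l:=0)"])
        using False gu gv ku kv glow by simp
    qed
  qed
  then show ?thesis unfolding trop_variety_def using w'l w'_def by simp
qed

theorem proposition3p9:
  fixes I :: "('n::finite) tpoly set" and l :: 'n and a :: real
  assumes "tropical_ideal I"
  shows "trop_variety (- {l}) (restrict_at l a ` I) \<subseteq> proj_out l ` (tvar I \<inter> {x. x $ l = a})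
    \<and> (\<forall>w \<Sigma> \<sigma>. w $ l = a \<and> polyhedral_complex \<Sigma> \<and> \<Union>\<Sigma> = tvar I \<and> \<sigma> \<in> \<Sigma>
           \<and> w \<in> \<sigma> \<and> \<not> span_diff \<sigma> \<subseteq> {x. x $ l = 0}
           \<longrightarrow> proj_out l w \<in> trop_variety (- {l}) (restrict_at l a ` I))
    \<and> (\<forall>w. (\<exists>\<Sigma> \<Delta>. polyhedral_complex \<Sigma> \<and> \<Union>\<Sigma> = tvar I
                 \<and> polyhedral_complex \<Delta> \<and> \<Union>\<Delta> = {x. x $ l = a} \<and> transverse_at \<Sigma> \<Delta> w)
           \<longrightarrow> proj_out l w \<in> trop_variety (- {l}) (restrict_at l a ` I))"
proof (intro conjI allI impI)
  show "trop_variety (- {l}) (restrict_at l a ` I) \<subseteq> proj_out l ` (tvar I \<inter> {x. x $ l = a})"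
    using part1[OF assms] by blast
  have P2: "proj_out l w \<in> trop_variety (- {l}) (restrict_at l a ` I)"
    if "w $ l = a" "polyhedral_complex \<Sigma>" "\<Union>\<Sigma> = tvar I" "\<sigma> \<in> \<Sigma>" "w \<in> \<sigma>"
       "\<not> span_diff \<sigma> \<subseteq> {x. x $ l = 0}" for w :: "real^'n" and \<Sigma> \<sigma>
  proof (rule part2[OF assms that(1) _ _ that(5,6)])
    show "\<sigma> \<subseteq> tvar I" using that(3,4) by blast
    show "convex \<sigma>" using that(2,4) unfolding polyhedral_complex_def
      by (meson polyhedron_imp_convex)
  qed
  show "proj_out l w \<in> trop_variety (- {l}) (restrict_at l a ` I)"
    if "w $ l = a \<and> polyhedral_complex \<Sigma> \<and> \<Union>\<Sigma> = tvar I \<and> \<sigma> \<in> \<Sigma>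
           \<and> w \<in> \<sigma> \<and> \<not> span_diff \<sigma> \<subseteq> {x. x $ l = 0}" for w \<Sigma> \<sigma>
    using P2 that by blast
  fix w :: "real^'n"
  assume "\<exists>\<Sigma> \<Delta>. polyhedral_complex \<Sigma> \<and> \<Union>\<Sigma> = tvar I
                 \<and> polyhedral_complex \<Delta> \<and> \<Union>\<Delta> = {x. x $ l = a} \<and> transverse_at \<Sigma> \<Delta> w"
  then obtain \<Sigma> \<Delta> where h: "polyhedral_complex \<Sigma>" "\<Union>\<Sigma> = tvar I" "\<Union>\<Delta> = {x. x $ l = a}"
    "transverse_at \<Sigma> \<Delta> w" by blast
  then obtain \<sigma>1 \<sigma>2 where s: "\<sigma>1 \<in> \<Sigma>" "\<sigma>2 \<in> \<Delta>" "w \<in> rel_interior \<sigma>1" "w \<in> rel_interior \<sigma>2"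
    "{x + y | x y. x \<in> span_diff \<sigma>1 \<and> y \<in> span_diff \<sigma>2} = UNIV"
    unfolding transverse_at_def by blast
  have w1: "w \<in> \<sigma>1" and w2: "w \<in> \<sigma>2" using s(3,4) rel_interior_subset by blast+
  have s2: "\<forall>x\<in>\<sigma>2. x $ l = a" using s(2) h(3) by blast
  have wl: "w $ l = a" using s2 w2 by blast
  have sp2: "span_diff \<sigma>2 \<subseteq> {x. x $ l = 0}" using span_hyp[OF s2] .
  have "\<not> span_diff \<sigma>1 \<subseteq> {x. x $ l = 0}"
  proof
    assume sp1: "span_diff \<sigma>1 \<subseteq> {x. x $ l = 0}"
    have "(\<chi> i. if i = l then (1::real) else 0) \<in> {x + y | x y. x \<in> span_diff \<sigma>1 \<and> y \<in> span_diff \<sigma>2}"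
      using s(5) by blast
    then obtain x y where "(\<chi> i. if i = l then (1::real) else 0) = x + y" "x \<in> span_diff \<sigma>1" "y \<in> span_diff \<sigma>2"
      by blast
    moreover have "x $ l = 0" "y $ l = 0" using calculation(2,3) sp1 sp2 by auto
    ultimately have "(\<chi> i. if i = l then (1::real) else 0) $ l = 0"
      by simp
    then show False by simp
  qed
  then show "proj_out l w \<in> trop_variety (- {l}) (restrict_at l a ` I)"
    using P2[OF wl h(1,2) s(1) w1] by blast
qed

end
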